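(* Assume $\Phi^{y,\dagger}\in L^1_{\mu_\theta}$ and $\Phi^{y,\mathrm{enh}}\in L^1_{\mu_\theta}$. Then $$\max\{d_{\mathrm{KL}}(\mu^{y,\dagger}_\theta\Vert\mu^{y,\mathrm{enh}}_\theta),d_{\mathrm{KL}}(\mu^{y,\mathrm{enh}}_\theta\Vert\mu^{y,\dagger}_\theta)\}\le C\Big(\Big\|\,|\mathcal{O}(\delta^\dagger-m_E)|^2_{\Sigma_\varepsilon^{-1}}\Big\|^{1/2}_{L^1_{\mu_\theta}}+\Big\|\,|y-\mathcal{O}\mathcal{M}-\mathcal{O}m_E|^2_{\Sigma_\varepsilon^{-1}-(\Sigma_\varepsilon+\Gamma_E)^{-1}}\Big\|_{L^1_{\mu_\theta}}\Big)$$ with $C=\exp\big(2\|\Phi^{y,\dagger}\|_{L^1_{\mu_\theta}}+2\|\Phi^{y,\mathrm{enh}}\|_{L^1_{\mu_\theta}}\big)\max\Big\{\sqrt2\big(\|\Phi^{y,\dagger}\|^{1/2}_{L^1_{\mu_\theta}}+C_{\mathrm{enh}}\|\Phi^{y,\mathrm{enh}}\|^{1/2}_{L^1_{\mu_\theta}}\big),1\Big\}$.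
   Context: Let $\Theta$ be a Borel subset of a separable Banach space and $\mu_\theta$ a Borel probability measure on $\Theta$. Let $\mathcal{U}$ be a Banach space, $n\in\mathbb{N}$, $\mathcal{O}:\mathcal{U}\to\mathbb{R}^n$ continuous linear, $\mathcal{M}^\dagger,\mathcal{M}:\Theta\to\mathcal{U}$ measurable, $\delta^\dagger:=\mathcal{M}^\dagger-\mathcal{M}$. Let $\Sigma_\varepsilon\in\mathbb{R}^{n\times n}$ be symmetric positive definite and $y\in\mathbb{R}^n$ fixed. For symmetric positive semidefinite $L$, $|a|_L:=(a^\top La)^{1/2}$, and for symmetric $A,B$ write $|a|^2_{A-B}:=a^\top Aa-a^\top Ba$. Fix $m_E\in\mathcal{U}$ and a covariance operator $\Sigma_E$ of a Gaussian measure on $\mathcal{U}$; $\Gamma_E:=\mathcal{O}\Sigma_E\mathcal{O}^*$ is symmetric positive semidefinite. Misfits: $\Phi^{y,\dagger}(\theta')=\tfrac12|y-\mathcal{O}\mathcal{M}^\dagger(\theta')|^2_{\Sigma_\varepsilon^{-1}}$, $\Phi^{y,\mathrm{enh}}(\theta')=\tfrac12|y-\mathcal{O}\mathcal{M}(\theta')-\mathcal{O}m_E|^2_{(\Sigma_\varepsilon+\Gamma_E)^{-1}}$. $C_{\mathrm{enh}}:=\|\Sigma_\varepsilon^{-1/2}(\Sigma_\varepsilon+\Gamma_E)^{1/2}\|_{\mathrm{op}}$. For a probability measure $\mu$ and measurable $\Phi\ge0$, $\mu_\Phi$ has density $\exp(-\Phi)/\int\exp(-\Phi)d\mu$ w.r.t.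 $\mu$. $\mu^{y,\dagger}_\theta:=(\mu_\theta)_{\Phi^{y,\dagger}}$, $\mu^{y,\mathrm{enh}}_\theta:=(\mu_\theta)_{\Phi^{y,\mathrm{enh}}}$. $d_{\mathrm{KL}}(\mu\Vert\nu)=\int\log\frac{d\mu}{d\nu}d\mu$ if $\mu\ll\nu$, $+\infty$ otherwise. *)

theory Defs
  imports "HOL-Analysis.Analysis" "HOL-Probability.Probability"
begin

definition sym_mat :: "real^'n^'n \<Rightarrow> bool" where
  "sym_mat A \<longleftrightarrow> transpose A = A"

definition spd :: "real^'n^'n \<Rightarrow> bool" where
  "spd A \<longleftrightarrow> sym_mat A \<and> (\<forall>x. x \<noteq> 0 \<longrightarrow> x \<bullet> (A *v x) > 0)"

definition spsd :: "real^'n^'n \<Rightarrow> bool" where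
  "spsd A \<longleftrightarrow> sym_mat A \<and> (\<forall>x. x \<bullet> (A *v x) \<ge> 0)"

definition sqrtm :: "real^'n^'n \<Rightarrow> real^'n^'n" where
  "sqrtm A = (THE R. spsd R \<and> R ** R = A)"

definition wsq :: "real^'n^'n \<Rightarrow> real^'n \<Rightarrow> real" where
  "wsq L a = a \<bullet> (L *v a)"

definition wsq_diff :: "real^'n^'n \<Rightarrow> real^'n^'n \<Rightarrow> real^'n \<Rightarrow> real" where
  "wsq_diff A B a = a \<bullet> (A *v a) - a \<bullet> (B *v a)"

definition reweight :: "'a measure \<Rightarrow> ('a \<Rightarrow> real) \<Rightarrow> 'a measure" where
  "reweight \<mu> \<Phi> = density \<mu> (\<lambda>x. ennreal (exp (- \<Phi> x) / (\<integral>t. exp (- \<Phi> t) \<partial>\<mu>)))"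

text \<open>Kullback--Leibler divergence d_KL(mu || nu), extended-real valued:
  +infinity unless mu << nu; if log(dmu/dnu) is not mu-integrable the value is +infinity.\<close>
definition d_KL :: "'a measure \<Rightarrow> 'a measure \<Rightarrow> ereal" where
  "d_KL \<mu> \<nu> =
    (if absolutely_continuous \<nu> \<mu> \<and> sets \<mu> = sets \<nu> then
       (if integrable \<mu> (\<lambda>x. ln (enn2real (RN_deriv \<nu> \<mu> x)))
        then ereal (\<integral>x. ln (enn2real (RN_deriv \<nu> \<mu> x)) \<partial>\<mu>)
        else \<infinity>)
     else \<infinity>)"

definition L1norm :: "'a measure \<Rightarrow> ('a \<Rightarrow> real) \<Rightarrow> real" where
  "L1norm \<mu> f = (\<integral>x. \<bar>f x\<bar> \<partial>\<mu>)"

end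

theory Submission
  imports Defs
begin


lemma sym_dot:
  fixes A :: "real^'n^'n"
  assumes "sym_mat A"
  shows "x \<bullet> (A *v y) = (A *v x) \<bullet> y"
proof -
  have "(A *v x) \<bullet> y = (x v* A) \<bullet> y"
    using assms unfolding sym_mat_def by (metis transpose_matrix_vector)
  also have "\<dots> = x \<bullet> (A *v y)" by (rule dot_lmul_matrix)
  finally show ?thesis by simp
qed

lemma sym_from_dot:
  fixes A :: "real^'n^'n"
  assumes "\<And>x y. x \<bullet> (A *v y) = (A *v x) \<bullet> y"
  shows "sym_mat A"
proof -
  have "transpose A *v x = A *v x" for x
  proof -
    have "(transpose A *v x - A *v x) \<bullet> y = 0" for y
      using assms[of x y] dot_lmul_matrix[of x A y]
      by (simp add: inner_diff_left)
    from this[of "transpose A *v x - A *v x"] show ?thesis by simp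
  qed
  then show ?thesis unfolding sym_mat_def by (simp add: matrix_eq)
qed

lemma inv_props:
  fixes A :: "real^'n^'n"
  assumes "invertible A"
  shows "A ** matrix_inv A = mat 1" "matrix_inv A ** A = mat 1"
proof -
  have "\<exists>A'. A ** A' = mat 1 \<and> A' ** A = mat 1" using assms unfolding invertible_def by blast
  from someI_ex[OF this] show "A ** matrix_inv A = mat 1" "matrix_inv A ** A = mat 1"
    unfolding matrix_inv_def by auto
qed

lemma inv_vec:
  fixes A :: "real^'n^'n"
  assumes "invertible A"
  shows "A *v (matrix_inv A *v x) = x" "matrix_inv A *v (A *v x) = x"
  using inv_props[OF assms] by (simp_all add: matrix_vector_mul_assoc)

lemma inj_invertible:
  fixes A :: "real^'n^'n"
  assumes "\<And>x. A *v x = 0 \<Longrightarrow> x = 0"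
  shows "invertible A"
proof -
  have "\<forall>x y. A *v x = A *v y \<longrightarrow> x = y"
  proof (intro allI impI)
    fix x y assume "A *v x = A *v y"
    then have "A *v (x - y) = 0" by (simp add: matrix_vector_mult_diff_distrib)
    then have "x - y = 0" using assms by blast
    then show "x = y" by simp
  qed
  then have "\<exists>B::real^'n^'n. B ** A = mat 1"
    by (subst matrix_left_invertible_injective) (simp add: inj_def)
  then show ?thesis by (subst invertible_left_inverse)
qed

lemma spd_invertible:
  fixes A :: "real^'n^'n"
  assumes "spd A" shows "invertible A"
proof (rule inj_invertible)
  fix x assume "A *v x = 0"
  then have "x \<bullet> (A *v x) = 0" by simp
  then show "x = 0" using assms unfolding spd_def by force
qed

lemma sym_inv_dot:
  fixes A :: "real^'n^'n"
  assumes "sym_mat A" "invertible A"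
  shows "x \<bullet> (matrix_inv A *v y) = (matrix_inv A *v x) \<bullet> y"
proof -
  let ?u = "matrix_inv A *v x" and ?v = "matrix_inv A *v y"
  have "x \<bullet> ?v = (A *v ?u) \<bullet> ?v" by (simp only: inv_vec(1)[OF assms(2)])
  also have "\<dots> = ?u \<bullet> (A *v ?v)" by (rule sym_dot[OF assms(1), symmetric])
  also have "\<dots> = ?u \<bullet> y" by (simp only: inv_vec(1)[OF assms(2)])
  finally show ?thesis .
qed

lemma quad_zero:
  fixes b c :: real
  assumes "\<And>t. 2*t*b + t^2*c \<le> 0"
  shows "b = 0"
proof -
  define k where "k = \<bar>c\<bar> + 1"
  have k: "k > 0" unfolding k_def by simp
  have "2*(b/k)*b + (b/k)^2*c \<le> 0" by (rule assms)
  then have "(2*(b/k)*b + (b/k)^2*c) * k^2 \<le> 0" using k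
    by (simp add: mult_nonpos_nonneg)
  moreover have "(2*(b/k)*b + (b/k)^2*c) * k^2 = b^2 * (2*k + c)" using k
    by (simp add: field_simps power2_eq_square)
  ultimately have "b^2 * (2*k + c) \<le> 0" by simp
  moreover have "2*k + c > 0" unfolding k_def by (cases "c \<ge> 0") auto
  ultimately have "b^2 \<le> 0" by (simp add: mult_le_0_iff)
  then show ?thesis by simp
qed

lemma eigbasis_sub:
  fixes A :: "real^'n^'n"
  assumes sym: "sym_mat A"
  shows "subspace V \<Longrightarrow> (\<forall>x\<in>V. A *v x \<in> V) \<Longrightarrow>
    \<exists>B. B \<subseteq> V \<and> finite B \<and> pairwise orthogonal B \<and>
        (\<forall>v\<in>B. norm v = 1 \<and> A *v v = (v \<bullet> (A *v v)) *\<^sub>R v) \<and> span B = V"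
proof (induction "dim V" arbitrary: V rule: less_induct)
  case less
  note sub = less.prems(1) and inv = less.prems(2)
  show ?case
  proof (cases "V = {0}")
    case True then show ?thesis by (intro exI[of _ "{}"]) auto
  next
    case False
    then obtain z where z: "z \<in> V" "z \<noteq> 0" using subspace_0[OF sub] by blast
    let ?S = "V \<inter> sphere 0 1"
    have cpt: "compact ?S" using closed_subspace[OF sub] by (intro closed_Int_compact) auto
    have "z /\<^sub>R norm z \<in> ?S" using z subspace_scale[OF sub] by auto
    then have ne: "?S \<noteq> {}" by blast
    have cont: "continuous_on ?S (\<lambda>x. x \<bullet> (A *v x))"
      by (intro continuous_intros linear_continuous_on linear_conv_bounded_linear[THEN iffD1]) auto
    obtain v where v: "v \<in> ?S" and vmax: "\<And>x. x \<in> ?S \<Longrightarrow> x \<bullet> (A *v x) \<le> v \<bullet> (A *v v)"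
      using continuous_attains_sup[OF cpt ne cont] by blast
    define l where "l = v \<bullet> (A *v v)"
    have vV: "v \<in> V" and nv: "norm v = 1" using v by auto
    have vv: "v \<bullet> v = 1" using nv by (simp add: norm_eq_1)
    have bound: "x \<bullet> (A *v x) \<le> l * (x \<bullet> x)" if "x \<in> V" for x
    proof (cases "x = 0")
      case True then show ?thesis by simp
    next
      case False
      let ?n = "norm x"
      have n: "?n > 0" using False by simp
      have "x /\<^sub>R ?n \<in> ?S" using that subspace_scale[OF sub] False by auto
      then have "(x /\<^sub>R ?n) \<bullet> (A *v (x /\<^sub>R ?n)) \<le> l" using vmax l_def by blast
      moreover have "(x /\<^sub>R ?n) \<bullet> (A *v (x /\<^sub>R ?n)) = (x \<bullet> (A *v x)) / ?n^2"
        by (simp add: matrix_vector_mult_scaleR power2_eq_square divide_inverse mult_ac)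
      ultimately have "(x \<bullet> (A *v x)) / ?n^2 \<le> l" by simp
      then have "x \<bullet> (A *v x) \<le> l * ?n^2" using n by (simp add: divide_le_eq)
      then show ?thesis by (simp add: power2_norm_eq_inner)
    qed
    have orth: "u \<bullet> (A *v v) = 0" if u: "u \<in> V" "u \<bullet> v = 0" for u
    proof (rule quad_zero)
      fix t :: real
      have w: "v + t *\<^sub>R u \<in> V" using u vV sub by (simp add: subspace_add subspace_scale)
      have e1: "(v + t *\<^sub>R u) \<bullet> (A *v (v + t *\<^sub>R u)) = l + 2*t*(u \<bullet> (A *v v)) + t^2 * (u \<bullet> (A *v u))"
        using sym_dot[OF sym, of v u]
        by (simp add: matrix_vector_right_distrib matrix_vector_mult_scaleR inner_add_left inner_add_right
             l_def power2_eq_square algebra_simps inner_commute)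
      have e2: "(v + t *\<^sub>R u) \<bullet> (v + t *\<^sub>R u) = 1 + t^2 * (u \<bullet> u)"
        using vv u(2) by (simp add: inner_add_left inner_add_right power2_eq_square algebra_simps inner_commute)
      have "l + 2*t*(u \<bullet> (A *v v)) + t^2 * (u \<bullet> (A *v u)) \<le> l * (1 + t^2 * (u \<bullet> u))"
        using bound[OF w] e1 e2 by simp
      then show "2*t*(u \<bullet> (A *v v)) + t^2*((u \<bullet> (A *v u)) - l * (u \<bullet> u)) \<le> 0"
        by (simp add: algebra_simps)
    qed
    have Av: "A *v v = l *\<^sub>R v"
    proof -
      define w where "w = A *v v - l *\<^sub>R v"
      have wV: "w \<in> V" unfolding w_def using inv vV sub by (simp add: subspace_diff subspace_scale)
      have "v \<bullet> w = 0" unfolding w_def using vv by (simp add: inner_diff_right l_def)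
      then have wv: "w \<bullet> v = 0" by (simp add: inner_commute)
      have "w \<bullet> (A *v v) = 0" by (rule orth[OF wV wv])
      then have "w \<bullet> w = 0" using wv unfolding w_def[of] by (simp add: inner_diff_right)
      then show ?thesis unfolding w_def by simp
    qed
    define V' where "V' = {u \<in> V. u \<bullet> v = 0}"
    have sub': "subspace V'" using sub unfolding V'_def subspace_def
      by (auto simp: inner_add_left)
    have inv': "\<forall>x\<in>V'. A *v x \<in> V'"
    proof
      fix x assume x: "x \<in> V'"
      have "(A *v x) \<bullet> v = x \<bullet> (A *v v)" using sym_dot[OF sym, of x v] by simp
      also have "\<dots> = 0" using Av x unfolding V'_def by simp
      finally show "A *v x \<in> V'" using x inv unfolding V'_def by auto
    qed
    have "v \<notin> V'" using vv unfolding V'_def by auto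
    then have "V' \<subset> V"
      using vV unfolding V'_def by blast
    moreover have e1: "span V' = V'" "span V = V" using sub sub' by simp_all
    ultimately have "span V' \<subset> span V" by (simp only: e1)
    then have "dim V' < dim V" by (rule dim_psubset)
    from less.hyps[OF this sub' inv'] obtain B' where B':
      "B' \<subseteq> V'" "finite B'" "pairwise orthogonal B'"
      "\<forall>v\<in>B'. norm v = 1 \<and> A *v v = (v \<bullet> (A *v v)) *\<^sub>R v" "span B' = V'" by blast
    show ?thesis
    proof (intro exI[of _ "insert v B'"] conjI)
      show "insert v B' \<subseteq> V" using B'(1) vV unfolding V'_def by auto
      show "finite (insert v B')" using B'(2) by simp
      show "pairwise orthogonal (insert v B')"
        using B'(1,3) unfolding pairwise_insert V'_def orthogonal_def by (auto simp: inner_commute)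
      show "\<forall>w\<in>insert v B'. norm w = 1 \<and> A *v w = (w \<bullet> (A *v w)) *\<^sub>R w"
        using B'(4) nv Av l_def by auto
      show "span (insert v B') = V"
      proof
        show "span (insert v B') \<subseteq> V" using B'(1) vV sub unfolding V'_def
          by (intro span_minimal) auto
        show "V \<subseteq> span (insert v B')"
        proof
          fix x assume x: "x \<in> V"
          have "x - (x \<bullet> v) *\<^sub>R v \<in> V'" using x vV vv sub unfolding V'_def
            by (auto simp: subspace_diff subspace_scale inner_diff_left)
          then have "x - (x \<bullet> v) *\<^sub>R v \<in> span (insert v B')"
            using B'(5) span_mono[of B' "insert v B'"] by auto
          moreover have "(x \<bullet> v) *\<^sub>R v \<in> span (insert v B')"
            by (intro span_mul span_base) simp
          ultimately have "(x - (x \<bullet> v) *\<^sub>R v) + (x \<bullet> v) *\<^sub>R v \<in> span (insert v B')"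
            by (rule span_add)
          then show "x \<in> span (insert v B')" by simp
        qed
      qed
    qed
  qed
qed

lemma onb_coef:
  fixes B :: "(real^'n) set"
  assumes "finite B" "pairwise orthogonal B" "\<forall>v\<in>B. norm v = 1" "w \<in> B"
  shows "w \<bullet> (\<Sum>v\<in>B. c v *\<^sub>R v) = c w"
proof -
  have "w \<bullet> (\<Sum>v\<in>B. c v *\<^sub>R v) = (\<Sum>v\<in>B. c v * (w \<bullet> v))"
    by (simp add: inner_sum_right)
  also have "\<dots> = c w * (w \<bullet> w) + (\<Sum>v\<in>B-{w}. c v * (w \<bullet> v))"
    using assms(1,4) by (simp add: sum.remove)
  also have "(\<Sum>v\<in>B-{w}. c v * (w \<bullet> v)) = 0"
    using assms(2,4) by (intro sum.neutral) (auto simp: pairwise_def orthogonal_def)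
  also have "w \<bullet> w = 1" using assms(3,4) by (simp add: norm_eq_1)
  finally show ?thesis by simp
qed

lemma onb_expand:
  fixes B :: "(real^'n) set"
  assumes "finite B" "pairwise orthogonal B" "\<forall>v\<in>B. norm v = 1" "span B = UNIV"
  shows "x = (\<Sum>v\<in>B. (v \<bullet> x) *\<^sub>R v)"
proof -
  define y where "y = x - (\<Sum>v\<in>B. (v \<bullet> x) *\<^sub>R v)"
  have yw: "orthogonal y w" if "w \<in> B" for w
  proof -
    have c: "w \<bullet> (\<Sum>v\<in>B. (v \<bullet> x) *\<^sub>R v) = w \<bullet> x"
      using onb_coef[OF assms(1-3) that, of "\<lambda>v. v \<bullet> x"] .
    have "w \<bullet> y = w \<bullet> x - w \<bullet> (\<Sum>v\<in>B. (v \<bullet> x) *\<^sub>R v)"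
      unfolding y_def by (rule inner_diff_right)
    then have "w \<bullet> y = 0" by (simp only: c diff_self)
    then show ?thesis unfolding orthogonal_def by (metis inner_commute)
  qed
  have "y \<in> span B" using assms(4) by simp
  then have "orthogonal y y" by (rule orthogonal_to_span) (rule yw)
  then have "y \<bullet> y = 0" by (simp only: orthogonal_def)
  then have "y = 0" by simp
  then show ?thesis unfolding y_def by simp
qed

lemma spd_sqrt_unique:
  fixes A :: "real^'n^'n"
  assumes "spd A"
  shows "\<exists>!R. spsd R \<and> R ** R = A"
proof -
  have sym: "sym_mat A" using assms unfolding spd_def by simp
  obtain B where B: "finite B" "pairwise orthogonal B"
      "\<forall>v\<in>B. norm v = 1 \<and> A *v v = (v \<bullet> (A *v v)) *\<^sub>R v" "span B = UNIV"
    using eigbasis_sub[OF sym, of UNIV] by auto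
  have Bn: "\<forall>v\<in>B. norm v = 1" using B(3) by simp
  define lam where "lam v = v \<bullet> (A *v v)" for v
  define c where "c v = sqrt (lam v)" for v
  have lam_pos: "lam v > 0" if "v \<in> B" for v
  proof -
    have "v \<noteq> 0" using B(3) that by auto
    then show ?thesis using assms unfolding spd_def lam_def by simp
  qed
  have Aeig: "A *v v = lam v *\<^sub>R v" if "v \<in> B" for v using B(3) that lam_def by simp
  have cc: "c v * c v = lam v" if "v \<in> B" for v
    using lam_pos[OF that] unfolding c_def by (simp add: real_sqrt_mult_self)
  define g where "g x = (\<Sum>v\<in>B. (c v * (v \<bullet> x)) *\<^sub>R v)" for x
  define R :: "real^'n^'n" where "R = (\<chi> i j. \<Sum>v\<in>B. c v * v$i * v$j)"
  have Rg: "R *v x = g x" for x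
    unfolding R_def g_def
    by (simp add: vec_eq_iff matrix_vector_mult_def inner_vec_def sum_distrib_left sum_distrib_right
        mult_ac sum.swap[of _ UNIV])
  have gcoef: "v \<bullet> g x = c v * (v \<bullet> x)" if "v \<in> B" for v x
    unfolding g_def by (rule onb_coef[OF B(1,2) Bn that])
  have exp: "x = (\<Sum>v\<in>B. (v \<bullet> x) *\<^sub>R v)" for x
    by (rule onb_expand[OF B(1,2) Bn B(4)])
  have lin_sum: "M *v (\<Sum>v\<in>B. d v *\<^sub>R v) = (\<Sum>v\<in>B. d v *\<^sub>R (M *v v))" for M :: "real^'n^'n" and d
    by (simp add: linear_sum[OF matrix_vector_mul_linear] linear_scale[OF matrix_vector_mul_linear] o_def)
  have Ax: "A *v x = (\<Sum>v\<in>B. (lam v * (v \<bullet> x)) *\<^sub>R v)" for x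
  proof -
    have "A *v x = A *v (\<Sum>v\<in>B. (v \<bullet> x) *\<^sub>R v)" using exp[of x] by simp
    also have "\<dots> = (\<Sum>v\<in>B. (v \<bullet> x) *\<^sub>R (A *v v))" by (rule lin_sum)
    also have "\<dots> = (\<Sum>v\<in>B. (lam v * (v \<bullet> x)) *\<^sub>R v)"
      by (intro sum.cong) (simp_all add: Aeig mult.commute)
    finally show ?thesis .
  qed
  have ex: "spsd R \<and> R ** R = A"
  proof (intro conjI)
    have "x \<bullet> (R *v y) = (R *v x) \<bullet> y" for x y
      unfolding Rg g_def by (simp add: inner_sum_left inner_sum_right mult_ac inner_commute)
    then have "sym_mat R" by (rule sym_from_dot)
    moreover have "x \<bullet> (R *v x) \<ge> 0" for x
    proof -
      have "x \<bullet> (R *v x) = (\<Sum>v\<in>B. c v * (v \<bullet> x)^2)"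
        unfolding Rg g_def by (simp add: inner_sum_right power2_eq_square mult_ac inner_commute)
      also have "\<dots> \<ge> 0" unfolding c_def
      proof (intro sum_nonneg)
        fix v assume "v \<in> B"
        then have "lam v > 0" by (rule lam_pos)
        then show "0 \<le> sqrt (lam v) * (v \<bullet> x)\<^sup>2" by simp
      qed
      finally show ?thesis .
    qed
    ultimately show "spsd R" unfolding spsd_def by simp
    have "(R ** R) *v x = A *v x" for x
    proof -
      have "(R ** R) *v x = g (g x)" by (simp add: matrix_vector_mul_assoc[symmetric] Rg)
      also have "\<dots> = (\<Sum>v\<in>B. (lam v * (v \<bullet> x)) *\<^sub>R v)"
        unfolding g_def[of "g x"] by (intro sum.cong) (simp_all add: gcoef cc mult.assoc[symmetric])
      finally show ?thesis using Ax by simp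
    qed
    then show "R ** R = A" by (simp add: matrix_eq)
  qed
  have uniq: "S = R" if S: "spsd S" "S ** S = A" for S
  proof -
    have Sv: "S *v v = c v *\<^sub>R v" if v: "v \<in> B" for v
    proof -
      define u where "u = S *v v - c v *\<^sub>R v"
      have SS: "S *v (S *v w) = A *v w" for w using S(2) by (simp add: matrix_vector_mul_assoc)
      have "S *v u = A *v v - c v *\<^sub>R (S *v v)"
        unfolding u_def by (simp add: matrix_vector_mult_diff_distrib matrix_vector_mult_scaleR SS)
      also have "\<dots> = - c v *\<^sub>R u" unfolding u_def Aeig[OF v]
        by (simp add: scaleR_diff_right cc[OF v, symmetric] algebra_simps)
      finally have "u \<bullet> (S *v u) = - c v * (u \<bullet> u)" by simp
      moreover have "u \<bullet> (S *v u) \<ge> 0" using S(1) unfolding spsd_def by simp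
      moreover have "c v > 0" using lam_pos[OF v] unfolding c_def by simp
      ultimately have "u \<bullet> u \<le> 0" by (simp add: mult_le_0_iff)
      then have "u \<bullet> u = 0" using inner_ge_zero[of u] by linarith
      then have "u = 0" by simp
      then show ?thesis unfolding u_def by simp
    qed
    have "S *v x = R *v x" for x
    proof -
      have "S *v x = S *v (\<Sum>v\<in>B. (v \<bullet> x) *\<^sub>R v)" using exp[of x] by simp
      also have "\<dots> = (\<Sum>v\<in>B. (v \<bullet> x) *\<^sub>R (S *v v))" by (rule lin_sum)
      also have "\<dots> = g x" unfolding g_def
        by (intro sum.cong) (simp_all add: Sv mult.commute)
      finally show ?thesis by (simp add: Rg)
    qed
    then show ?thesis by (simp add: matrix_eq)
  qed
  show ?thesis using ex uniq by blast
qed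

lemma sqrtm_props:
  fixes A :: "real^'n^'n"
  assumes "spd A"
  shows "spsd (sqrtm A)" "sqrtm A ** sqrtm A = A"
  using theI'[OF spd_sqrt_unique[OF assms]] unfolding sqrtm_def by auto

lemma spd_add:
  fixes S G :: "real^'n^'n"
  assumes "spd S" "spsd G" shows "spd (S + G)"
proof -
  have "sym_mat (S + G)" using assms unfolding spd_def spsd_def sym_mat_def
    by (simp add: transpose_def vec_eq_iff)
  moreover have "x \<bullet> ((S + G) *v x) > 0" if "x \<noteq> 0" for x
  proof -
    have "x \<bullet> (S *v x) > 0" "x \<bullet> (G *v x) \<ge> 0" using assms that unfolding spd_def spsd_def by auto
    then show ?thesis by (simp add: matrix_vector_mult_add_rdistrib inner_add_right)
  qed
  ultimately show ?thesis unfolding spd_def by auto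
qed

lemma sqrt_facts:
  fixes A :: "real^'n^'n"
  assumes "spd A"
  shows "invertible (sqrtm A)" "sym_mat (sqrtm A)"
    "sqrtm A *v (sqrtm A *v x) = A *v x"
    "b \<bullet> (matrix_inv A *v b) = norm (matrix_inv (sqrtm A) *v b)^2"
proof -
  let ?R = "sqrtm A"
  have R: "spsd ?R" "?R ** ?R = A" using sqrtm_props[OF assms] by auto
  show RR: "?R *v (?R *v x) = A *v x" for x using R(2) by (simp add: matrix_vector_mul_assoc)
  show sym: "sym_mat ?R" using R(1) unfolding spsd_def by simp
  have iA: "invertible A" by (rule spd_invertible[OF assms])
  show inv: "invertible ?R"
  proof (rule inj_invertible)
    fix x assume "?R *v x = 0"
    then have "A *v x = 0" using RR[of x] by simp
    then have "matrix_inv A *v (A *v x) = 0" by simp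
    then show "x = 0" using inv_vec(2)[OF iA] by simp
  qed
  let ?iR = "matrix_inv ?R"
  have "A *v (?iR *v (?iR *v b)) = b" using RR[of "?iR *v (?iR *v b)"] inv_vec(1)[OF inv] by simp
  then have "matrix_inv A *v b = ?iR *v (?iR *v b)" using inv_vec(2)[OF iA, of "?iR *v (?iR *v b)"] by simp
  then have "b \<bullet> (matrix_inv A *v b) = b \<bullet> (?iR *v (?iR *v b))" by simp
  also have "\<dots> = (?iR *v b) \<bullet> (?iR *v b)" by (rule sym_inv_dot[OF sym inv])
  finally show "b \<bullet> (matrix_inv A *v b) = norm (?iR *v b)^2" by (simp add: power2_norm_eq_inner)
qed

lemma enh_facts:
  fixes S G :: "real^'n^'n"
  assumes S: "spd S" and G: "spsd G"
  defines "iR1 \<equiv> matrix_inv (sqrtm S)" and "iR2 \<equiv> matrix_inv (sqrtm (S + G))"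
  shows "norm (iR2 *v b) \<le> norm (iR1 *v b)"
    "norm (iR1 *v b) \<le> onorm (\<lambda>x. (iR1 ** sqrtm (S + G)) *v x) * norm (iR2 *v b)"
proof -
  have SG: "spd (S + G)" by (rule spd_add[OF S G])
  let ?R1 = "sqrtm S" and ?R2 = "sqrtm (S + G)"
  note f1 = sqrt_facts[OF S] and f2 = sqrt_facts[OF SG]
  have iSG: "invertible (S + G)" by (rule spd_invertible[OF SG])
  define u where "u = matrix_inv (S + G) *v b"
  have Su: "(S + G) *v u = b" unfolding u_def by (rule inv_vec(1)[OF iSG])
  have symS: "sym_mat S" using S unfolding spd_def by simp
  have "b \<bullet> (matrix_inv (S + G) *v b) = u \<bullet> ((S + G) *v u)"
    unfolding u_def using sym_dot[OF spd_def[THEN iffD1, OF SG, THEN conjunct1]] inv_vec(1)[OF iSG]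
    by (metis inner_commute)
  also have "\<dots> = u \<bullet> (S *v u) + u \<bullet> (G *v u)"
    by (simp add: matrix_vector_mult_add_rdistrib inner_add_right)
  finally have bPb: "norm (iR2 *v b)^2 = u \<bullet> (S *v u) + u \<bullet> (G *v u)"
    using f2(4)[of b] unfolding iR2_def by simp
  have "u \<bullet> b = u \<bullet> ((S + G) *v u)" using Su by simp
  then have ub: "u \<bullet> b = u \<bullet> (S *v u) + u \<bullet> (G *v u)"
    by (simp add: matrix_vector_mult_add_rdistrib inner_add_right)
  have Gu: "u \<bullet> (G *v u) \<ge> 0" using G unfolding spsd_def by simp
  have "0 \<le> norm (?R1 *v u - iR1 *v b)^2" by simp
  also have "\<dots> = (?R1 *v u) \<bullet> (?R1 *v u) - 2 * ((?R1 *v u) \<bullet> (iR1 *v b)) + (iR1 *v b) \<bullet> (iR1 *v b)"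
    by (simp add: power2_norm_eq_inner inner_diff_left inner_diff_right inner_commute)
  also have "(?R1 *v u) \<bullet> (?R1 *v u) = u \<bullet> (S *v u)"
    using sym_dot[OF f1(2), of u "?R1 *v u"] f1(3)[of u] by simp
  also have "(?R1 *v u) \<bullet> (iR1 *v b) = u \<bullet> b"
    using sym_dot[OF f1(2), of u "iR1 *v b"] inv_vec(1)[OF f1(1)] unfolding iR1_def by simp
  also have "(iR1 *v b) \<bullet> (iR1 *v b) = norm (iR1 *v b)^2" by (simp add: power2_norm_eq_inner)
  finally have "norm (iR2 *v b)^2 \<le> norm (iR1 *v b)^2" using bPb ub Gu by linarith
  then show "norm (iR2 *v b) \<le> norm (iR1 *v b)" by (simp add: power2_le_iff_abs_le)
  have "iR1 *v b = (iR1 ** ?R2) *v (iR2 *v b)"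
    unfolding iR2_def by (simp add: matrix_vector_mul_assoc[symmetric] inv_vec(1)[OF f2(1)])
  moreover have "bounded_linear (\<lambda>x. (iR1 ** ?R2) *v x)"
    by (simp add: linear_conv_bounded_linear[symmetric])
  ultimately show "norm (iR1 *v b) \<le> onorm (\<lambda>x. (iR1 ** ?R2) *v x) * norm (iR2 *v b)"
    using onorm by metis
qed

lemma pointwise_bound:
  fixes al be ga :: "'v::real_normed_vector" and C :: real
  assumes "norm be \<le> norm ga" "norm ga \<le> C * norm be"
  shows "\<bar>1/2 * norm al^2 - 1/2 * norm be^2\<bar> \<le>
     1/2 * (norm (ga - al) * (norm al + C * norm be) + (norm ga^2 - norm be^2))"
proof -
  have t: "\<bar>norm al - norm ga\<bar> \<le> norm (ga - al)"
    using norm_triangle_ineq3[of al ga] by (simp add: norm_minus_commute)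
  have "norm al^2 - norm ga^2 = (norm al - norm ga) * (norm al + norm ga)"
    by (simp add: power2_eq_square algebra_simps)
  then have "\<bar>norm al^2 - norm ga^2\<bar> = \<bar>norm al - norm ga\<bar> * (norm al + norm ga)"
    by (simp add: abs_mult)
  also have "\<dots> \<le> norm (ga - al) * (norm al + C * norm be)"
    using t assms(2) by (intro mult_mono) auto
  finally have h1: "\<bar>norm al^2 - norm ga^2\<bar> \<le> norm (ga - al) * (norm al + C * norm be)" .
  have h2: "norm be^2 \<le> norm ga^2" using assms(1) by (intro power_mono) auto
  show ?thesis using h1 h2 by argo
qed



lemma exp_diff_le:
  fixes s t :: real
  assumes "0 \<le> s" "0 \<le> t"
  shows "exp (- s) - exp (- t) \<le> \<bar>s - t\<bar>"
proof (cases "t \<le> s")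
  case True
  then have "exp (- s) \<le> exp (- t)" by simp
  then show ?thesis using True by linarith
next
  case False
  have e: "exp (- t) = exp (- s) * exp (s - t)" by (simp add: exp_add[symmetric])
  have "exp (s - t) \<ge> 1 + (s - t)" by (rule exp_ge_add_one_self)
  then have h1: "1 - exp (s - t) \<le> t - s" by linarith
  have h2: "0 \<le> 1 - exp (s - t)" using False by simp
  have h3: "exp (- s) \<le> 1" using assms by auto
  have "exp (- s) * (1 - exp (s - t)) \<le> 1 * (t - s)"
    using h1 h2 h3 by (intro mult_mono) auto
  then show ?thesis using False e by (simp add: algebra_simps)
qed

lemma CS_integral:
  fixes f g :: "'a \<Rightarrow> real"
  assumes [measurable]: "f \<in> borel_measurable M" "g \<in> borel_measurable M"
    and nn: "\<And>x. x \<in> space M \<Longrightarrow> 0 \<le> f x" "\<And>x. x \<in> space M \<Longrightarrow> 0 \<le> g x"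
    and i: "integrable M (\<lambda>x. f x^2)" "integrable M (\<lambda>x. g x^2)"
  shows "integrable M (\<lambda>x. f x * g x)"
    "(\<integral>x. f x * g x \<partial>M) \<le> sqrt (\<integral>x. f x^2 \<partial>M) * sqrt (\<integral>x. g x^2 \<partial>M)"
proof -
  have ifg: "integrable M (\<lambda>x. f x^2 + g x^2)" using i by simp
  show ifg2: "integrable M (\<lambda>x. f x * g x)"
  proof (rule Bochner_Integration.integrable_bound[OF ifg])
    show "AE x in M. norm (f x * g x) \<le> norm (f x^2 + g x^2)"
    proof (rule AE_I2)
      fix x assume "x \<in> space M"
      then have "0 \<le> f x" "0 \<le> g x" using nn by auto
      moreover have "f x * g x \<le> f x^2 + g x^2"
      proof -
        have "2 * f x * g x \<le> f x^2 + g x^2" by (rule sum_squares_bound)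
        moreover have "0 \<le> f x * g x" using \<open>0 \<le> f x\<close> \<open>0 \<le> g x\<close> by simp
        ultimately show ?thesis by linarith
      qed
      ultimately show "norm (f x * g x) \<le> norm (f x^2 + g x^2)" by simp
    qed
  qed simp
  define F where "F = (\<integral>x. f x^2 \<partial>M)"
  define G where "G = (\<integral>x. g x^2 \<partial>M)"
  have F0: "F \<ge> 0" "G \<ge> 0" unfolding F_def G_def by (auto intro: integral_nonneg_AE)
  show "(\<integral>x. f x * g x \<partial>M) \<le> sqrt F * sqrt G"
  proof (cases "F = 0 \<or> G = 0")
    case True
    then have "AE x in M. f x * g x = 0"
    proof
      assume "F = 0"
      then have "AE x in M. f x^2 = 0" unfolding F_def
        using integral_nonneg_eq_0_iff_AE[OF i(1)] by simp
      then show ?thesis by eventually_elim simp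
    next
      assume "G = 0"
      then have "AE x in M. g x^2 = 0" unfolding G_def
        using integral_nonneg_eq_0_iff_AE[OF i(2)] by simp
      then show ?thesis by eventually_elim simp
    qed
    then have "(\<integral>x. f x * g x \<partial>M) = (\<integral>x. 0 \<partial>M)" by (intro integral_cong_AE) auto
    then show ?thesis using F0 by simp
  next
    case False
    then have Fp: "F > 0" "G > 0" using F0 by auto
    define th where "th = sqrt G / sqrt F"
    have th: "th > 0" unfolding th_def using Fp by simp
    have pw: "f x * g x \<le> (th * f x^2 + g x^2 / th) / 2" for x
    proof -
      have "0 \<le> (th * f x - g x)^2" by simp
      then have "0 \<le> (th^2 * f x^2 + g x^2 - 2 * th * (f x * g x)) / th" using th
        by (simp add: power2_eq_square algebra_simps)
      then show ?thesis using th by (simp add: field_simps power2_eq_square)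
    qed
    have "(\<integral>x. f x * g x \<partial>M) \<le> (\<integral>x. (th * f x^2 + g x^2 / th) / 2 \<partial>M)"
      using i ifg2 pw by (intro integral_mono) auto
    also have "\<dots> = (th * F + G / th) / 2"
      unfolding F_def G_def using i by simp
    also have "\<dots> = sqrt F * sqrt G"
    proof -
      have key: "(b/a * a^2 + b^2/(b/a))/2 = a*b" if "a>0" "b>0" for a b :: real
        using that by (simp add: field_simps power2_eq_square)
      show ?thesis using key[of "sqrt F" "sqrt G"] Fp unfolding th_def
        by (simp add: real_sqrt_pow2 less_imp_le)
    qed
    finally show ?thesis .
  qed
qed

lemma Z_facts:
  fixes \<Phi> :: "'a \<Rightarrow> real"
  assumes P: "prob_space M" and [measurable]: "\<Phi> \<in> borel_measurable M"
    and nn: "\<And>x. x \<in> space M \<Longrightarrow> 0 \<le> \<Phi> x" and iP: "integrable M \<Phi>"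
  shows "integrable M (\<lambda>x. exp (- \<Phi> x))" "(\<integral>x. exp (- \<Phi> x) \<partial>M) \<le> 1"
    "exp (- (\<integral>x. \<Phi> x \<partial>M)) \<le> (\<integral>x. exp (- \<Phi> x) \<partial>M)"
proof -
  interpret prob_space M by fact
  show ie: "integrable M (\<lambda>x. exp (- \<Phi> x))"
    by (intro integrable_const_bound[where B=1]) (auto simp: nn)
  have "(\<integral>x. exp (- \<Phi> x) \<partial>M) \<le> (\<integral>x. 1 \<partial>M)"
    using ie nn by (intro integral_mono) auto
  then show "(\<integral>x. exp (- \<Phi> x) \<partial>M) \<le> 1" by (simp add: prob_space)
  define m where "m = (\<integral>x. \<Phi> x \<partial>M)"
  have pw: "exp (- m) * (1 + m - \<Phi> x) \<le> exp (- \<Phi> x)" for x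
  proof -
    have "1 + (m - \<Phi> x) \<le> exp (m - \<Phi> x)" by (rule exp_ge_add_one_self)
    then have "exp (- m) * (1 + (m - \<Phi> x)) \<le> exp (- m) * exp (m - \<Phi> x)" by simp
    also have "exp (- m) * exp (m - \<Phi> x) = exp (- \<Phi> x)" by (simp add: exp_add[symmetric])
    also have "1 + (m - \<Phi> x) = 1 + m - \<Phi> x" by simp
    finally show ?thesis .
  qed
  have i2: "integrable M (\<lambda>x. exp (- m) * (1 + m - \<Phi> x))" using iP by simp
  have "(\<integral>x. exp (- m) * (1 + m - \<Phi> x) \<partial>M) = exp (- m) * ((1 + m) - m)"
    using iP unfolding m_def by (simp add: integral_diff prob_space)
  also have "\<dots> = exp (- m)" by simp
  finally have "exp (- m) = (\<integral>x. exp (- m) * (1 + m - \<Phi> x) \<partial>M)" by simp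
  also have "\<dots> \<le> (\<integral>x. exp (- \<Phi> x) \<partial>M)" using i2 ie pw by (intro integral_mono) auto
  finally show "exp (- (\<integral>x. \<Phi> x \<partial>M)) \<le> (\<integral>x. exp (- \<Phi> x) \<partial>M)" unfolding m_def .
qed

lemma KL_bound:
  fixes \<Phi>1 \<Phi>2 :: "'a \<Rightarrow> real"
  assumes P: "prob_space M" and m1[measurable]: "\<Phi>1 \<in> borel_measurable M"
    and m2[measurable]: "\<Phi>2 \<in> borel_measurable M"
    and nn1: "\<And>x. x \<in> space M \<Longrightarrow> 0 \<le> \<Phi>1 x" and nn2: "\<And>x. x \<in> space M \<Longrightarrow> 0 \<le> \<Phi>2 x"
    and i1: "integrable M \<Phi>1" and i2: "integrable M \<Phi>2"
  shows "d_KL (reweight M \<Phi>1) (reweight M \<Phi>2)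
     \<le> ereal (2 * exp (\<integral>x. \<Phi>1 x \<partial>M) * (\<integral>x. \<bar>\<Phi>1 x - \<Phi>2 x\<bar> \<partial>M))"
proof -
  interpret prob_space M by fact
  define Z1 where "Z1 = (\<integral>x. exp (- \<Phi>1 x) \<partial>M)"
  define Z2 where "Z2 = (\<integral>x. exp (- \<Phi>2 x) \<partial>M)"
  note zf1 = Z_facts[OF P m1 nn1 i1] and zf2 = Z_facts[OF P m2 nn2 i2]
  have Z1p: "Z1 > 0" using zf1(3) unfolding Z1_def by (meson exp_gt_zero less_le_trans)
  have Z2p: "Z2 > 0" using zf2(3) unfolding Z2_def by (meson exp_gt_zero less_le_trans)
  define r1 where "r1 x = exp (- \<Phi>1 x) / Z1" for x
  define r2 where "r2 x = exp (- \<Phi>2 x) / Z2" for x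
  have r1m[measurable]: "r1 \<in> borel_measurable M" unfolding r1_def by measurable
  have r2m[measurable]: "r2 \<in> borel_measurable M" unfolding r2_def by measurable
  have r1p: "r1 x > 0" for x unfolding r1_def using Z1p by simp
  have r2p: "r2 x > 0" for x unfolding r2_def using Z2p by simp
  define N1 where "N1 = reweight M \<Phi>1"
  define N2 where "N2 = reweight M \<Phi>2"
  have N1: "N1 = density M (\<lambda>x. ennreal (r1 x))" unfolding N1_def reweight_def r1_def Z1_def ..
  have N2: "N2 = density M (\<lambda>x. ennreal (r2 x))" unfolding N2_def reweight_def r2_def Z2_def ..
  have sN1: "sets N1 = sets M" and sN2: "sets N2 = sets M" by (simp_all add: N1 N2)
  have ac: "absolutely_continuous N2 N1"
    unfolding absolutely_continuous_def
  proof
    fix A assume "A \<in> null_sets N2"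
    then have A: "A \<in> sets M" "AE x in M. x \<in> A \<longrightarrow> ennreal (r2 x) = 0"
      unfolding N2 by (simp_all add: null_sets_density_iff)
    from A(2) have "AE x in M. x \<in> A \<longrightarrow> ennreal (r1 x) = 0"
    proof eventually_elim
      case (elim x)
      then show ?case using r2p[of x] by auto
    qed
    then show "A \<in> null_sets N1" unfolding N1 using A(1) by (simp add: null_sets_density_iff)
  qed
  have ir1: "integrable M r1" unfolding r1_def using zf1(1) by simp
  have ir2: "integrable M r2" unfolding r2_def using zf2(1) by simp
  have "emeasure N2 (space N2) = (\<integral>\<^sup>+x. ennreal (r2 x) \<partial>M)"
    unfolding N2 by (simp add: emeasure_density)
  also have "\<dots> = ennreal (\<integral>x. r2 x \<partial>M)" using ir2 r2p
    by (intro nn_integral_eq_integral) (auto intro: less_imp_le)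
  finally have "emeasure N2 (space N2) \<noteq> \<infinity>" by simp
  then interpret N2: finite_measure N2 by (rule finite_measureI)
  define h where "h x = ennreal (r1 x / r2 x)" for x
  have heq: "h = (\<lambda>x. ennreal (r1 x / r2 x))" by (simp add: h_def fun_eq_iff)
  have "(\<lambda>x. ennreal (r1 x / r2 x)) \<in> borel_measurable M" by measurable
  then have hm: "h \<in> borel_measurable N2" unfolding N2 heq by simp
  have "density N2 h = density M (\<lambda>x. ennreal (r2 x) * h x)"
    unfolding N2 by (rule density_density_eq) (simp_all add: heq)
  also have "\<dots> = N1" unfolding N1 h_def
  proof (intro density_cong)
    show "AE x in M. ennreal (r2 x) * ennreal (r1 x / r2 x) = ennreal (r1 x)"
    proof (rule AE_I2)
      fix x
      have "ennreal (r2 x) * ennreal (r1 x / r2 x) = ennreal (r2 x * (r1 x / r2 x))"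
        using r1p[of x] r2p[of x] by (subst ennreal_mult) (auto intro: less_imp_le)
      also have "\<dots> = ennreal (r1 x)" using r2p[of x] by simp
      finally show "ennreal (r2 x) * ennreal (r1 x / r2 x) = ennreal (r1 x)" .
    qed
  qed simp_all
  finally have dN: "density N2 h = N1" .
  have "AE x in N2. h x = RN_deriv N2 N1 x" by (rule N2.RN_deriv_unique[OF hm dN])
  then have AE_M: "AE x in M. h x = RN_deriv N2 N1 x"
    unfolding N2 by (subst (asm) AE_density) (simp_all add: r2p)
  define c where "c = ln Z2 - ln Z1"
  define L where "L x = \<Phi>2 x - \<Phi>1 x + c" for x
  have Lm[measurable]: "L \<in> borel_measurable M" unfolding L_def[abs_def] by measurable
  have lnr: "ln (r1 x / r2 x) = L x" for x
  proof -
    have e: "r1 x / r2 x = exp (\<Phi>2 x - \<Phi>1 x) * (Z2 / Z1)"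
      unfolding r1_def r2_def using Z1p Z2p by (simp add: exp_diff field_simps exp_minus)
    have "ln (exp (\<Phi>2 x - \<Phi>1 x) * (Z2 / Z1)) = ln (exp (\<Phi>2 x - \<Phi>1 x)) + ln (Z2 / Z1)"
      using Z1p Z2p by (intro ln_mult_pos) auto
    then have "ln (r1 x / r2 x) = ln (exp (\<Phi>2 x - \<Phi>1 x)) + ln (Z2 / Z1)"
      by (simp only: e)
    also have "\<dots> = L x" unfolding L_def c_def using Z1p Z2p by (simp add: ln_div)
    finally show ?thesis .
  qed
  have RNm: "RN_deriv N2 N1 \<in> borel_measurable M"
    using borel_measurable_RN_deriv[of N2 N1] unfolding N2 by simp
  have lnm: "(\<lambda>x. ln (enn2real (RN_deriv N2 N1 x))) \<in> borel_measurable M"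
    using RNm by measurable
  have "AE x in M. 0 < ennreal (r1 x) \<longrightarrow> ln (enn2real (RN_deriv N2 N1 x)) = L x"
    using AE_M
  proof eventually_elim
    case (elim x)
    then have "RN_deriv N2 N1 x = ennreal (r1 x / r2 x)" unfolding h_def by simp
    then have "enn2real (RN_deriv N2 N1 x) = r1 x / r2 x" using r1p[of x] r2p[of x] by simp
    then show ?case using lnr by simp
  qed
  moreover have em1: "(\<lambda>x. ennreal (r1 x)) \<in> borel_measurable M" by measurable
  ultimately have AE_N1: "AE x in N1. ln (enn2real (RN_deriv N2 N1 x)) = L x"
    unfolding N1 using AE_density[OF em1] by simp
  have bnd: "\<bar>r1 x * L x\<bar> \<le> (1 / Z1) * (\<Phi>1 x + \<Phi>2 x + \<bar>c\<bar>)" if x: "x \<in> space M" for x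
  proof -
    have r1le: "r1 x \<le> 1 / Z1" unfolding r1_def using Z1p nn1[OF x] by (simp add: divide_right_mono)
    have "\<bar>L x\<bar> \<le> \<Phi>1 x + \<Phi>2 x + \<bar>c\<bar>" unfolding L_def using nn1[OF x] nn2[OF x] by linarith
    then have "r1 x * \<bar>L x\<bar> \<le> (1 / Z1) * (\<Phi>1 x + \<Phi>2 x + \<bar>c\<bar>)"
      using r1le r1p[of x] Z1p by (intro mult_mono) auto
    then show ?thesis using r1p[of x] by (simp add: abs_mult)
  qed
  have iB: "integrable M (\<lambda>x. (1 / Z1) * (\<Phi>1 x + \<Phi>2 x + \<bar>c\<bar>))" using i1 i2 by simp
  have irL: "integrable M (\<lambda>x. r1 x * L x)"
  proof (rule Bochner_Integration.integrable_bound[OF iB])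
    show "AE x in M. norm (r1 x * L x) \<le> norm ((1 / Z1) * (\<Phi>1 x + \<Phi>2 x + \<bar>c\<bar>))"
    proof (rule AE_I2)
      fix x assume x: "x \<in> space M"
      have "\<bar>r1 x * L x\<bar> \<le> (1 / Z1) * (\<Phi>1 x + \<Phi>2 x + \<bar>c\<bar>)" by (rule bnd[OF x])
      also have "\<dots> \<le> \<bar>(1 / Z1) * (\<Phi>1 x + \<Phi>2 x + \<bar>c\<bar>)\<bar>" by (rule abs_ge_self)
      finally show "norm (r1 x * L x) \<le> norm ((1 / Z1) * (\<Phi>1 x + \<Phi>2 x + \<bar>c\<bar>))" by simp
    qed
  qed simp
  have irL': "integrable M (\<lambda>x. r1 x *\<^sub>R L x)" using irL by simp
  have iN1L: "integrable N1 L" unfolding N1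
    using irL' r1p by (subst integrable_density) (auto intro: less_imp_le)
  have iN1: "integrable N1 (\<lambda>x. ln (enn2real (RN_deriv N2 N1 x)))"
    using iN1L AE_N1 lnm by (subst integrable_cong_AE[where g=L]) (simp_all add: N1)
  have intN1: "(\<integral>x. ln (enn2real (RN_deriv N2 N1 x)) \<partial>N1) = (\<integral>x. r1 x * L x \<partial>M)"
  proof -
    have "(\<integral>x. ln (enn2real (RN_deriv N2 N1 x)) \<partial>N1) = (\<integral>x. L x \<partial>N1)"
      using AE_N1 lnm by (intro integral_cong_AE) (simp_all add: N1)
    also have "\<dots> = (\<integral>x. r1 x *\<^sub>R L x \<partial>M)" unfolding N1
      using r1p by (subst integral_density) (auto intro: less_imp_le)
    finally show ?thesis by simp
  qed
  define I where "I = (\<integral>x. \<bar>\<Phi>1 x - \<Phi>2 x\<bar> \<partial>M)"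
  have iI: "integrable M (\<lambda>x. \<bar>\<Phi>1 x - \<Phi>2 x\<bar>)" using i1 i2 by simp
  have I0: "I \<ge> 0" unfolding I_def by simp
  have pw: "r1 x * L x \<le> (1 / Z1) * \<bar>\<Phi>1 x - \<Phi>2 x\<bar> + c * r1 x" if x: "x \<in> space M" for x
  proof -
    have r1le: "r1 x \<le> 1 / Z1" unfolding r1_def using Z1p nn1[OF x] by (simp add: divide_right_mono)
    have "r1 x * (\<Phi>2 x - \<Phi>1 x) \<le> r1 x * \<bar>\<Phi>1 x - \<Phi>2 x\<bar>"
      using r1p[of x] by (intro mult_left_mono) auto
    also have "\<dots> \<le> (1 / Z1) * \<bar>\<Phi>1 x - \<Phi>2 x\<bar>" using r1le by (intro mult_right_mono) auto
    finally show ?thesis unfolding L_def by (simp add: algebra_simps)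
  qed
  have intr1: "(\<integral>x. r1 x \<partial>M) = 1"
    unfolding r1_def using Z1p by (simp add: Z1_def)
  have "(\<integral>x. r1 x * L x \<partial>M) \<le> (\<integral>x. (1 / Z1) * \<bar>\<Phi>1 x - \<Phi>2 x\<bar> + c * r1 x \<partial>M)"
    using irL iI ir1 pw by (intro integral_mono) auto
  also have "\<dots> = I / Z1 + c" using iI ir1 intr1 unfolding I_def by simp
  finally have st1: "(\<integral>x. r1 x * L x \<partial>M) \<le> I / Z1 + c" .
  have cle: "c \<le> Z2 / Z1 - 1"
  proof -
    have "c = ln (Z2 / Z1)" unfolding c_def using Z1p Z2p by (simp add: ln_div)
    also have "\<dots> \<le> Z2 / Z1 - 1" using Z1p Z2p by (intro ln_le_minus_one) simp
    finally show ?thesis .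
  qed
  have ZI: "Z2 - Z1 \<le> I"
  proof -
    have "Z2 - Z1 = (\<integral>x. exp (- \<Phi>2 x) - exp (- \<Phi>1 x) \<partial>M)"
      unfolding Z1_def Z2_def using zf1(1) zf2(1) by simp
    also have "\<dots> \<le> I" unfolding I_def using zf1(1) zf2(1) iI
      by (intro integral_mono) (auto intro: order_trans[OF exp_diff_le] simp: nn1 nn2 abs_minus_commute)
    finally show ?thesis .
  qed
  have "Z2 / Z1 - 1 = (Z2 - Z1) / Z1" using Z1p by (simp add: field_simps)
  also have "\<dots> \<le> I / Z1" using ZI Z1p by (simp add: divide_right_mono)
  finally have "(\<integral>x. r1 x * L x \<partial>M) \<le> 2 * (I / Z1)" using st1 cle by linarith
  also have "I / Z1 \<le> exp (\<integral>x. \<Phi>1 x \<partial>M) * I"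
  proof -
    have "exp (- (\<integral>x. \<Phi>1 x \<partial>M)) \<le> Z1" using zf1(3) unfolding Z1_def .
    then have "1 / Z1 \<le> 1 / exp (- (\<integral>x. \<Phi>1 x \<partial>M))" using Z1p
      by (intro divide_left_mono) auto
    then have "1 / Z1 \<le> exp (\<integral>x. \<Phi>1 x \<partial>M)" by (simp add: exp_minus divide_inverse)
    then have "(1 / Z1) * I \<le> exp (\<integral>x. \<Phi>1 x \<partial>M) * I" using I0 by (intro mult_right_mono)
    then show ?thesis by simp
  qed
  finally have main: "(\<integral>x. r1 x * L x \<partial>M) \<le> 2 * exp (\<integral>x. \<Phi>1 x \<partial>M) * I" by simp
  have "d_KL N1 N2 = ereal (\<integral>x. ln (enn2real (RN_deriv N2 N1 x)) \<partial>N1)"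
    unfolding d_KL_def using ac iN1 sN1 sN2 by simp
  then show ?thesis using main intN1 unfolding N1_def N2_def I_def by simp
qed

lemma mv_meas:
  fixes A :: "real^'n^'n"
  assumes "f \<in> borel_measurable M"
  shows "(\<lambda>t. A *v f t) \<in> borel_measurable M"
  by (rule borel_measurable_continuous_on[where f="\<lambda>x. A *v x", OF _ assms])
     (intro linear_continuous_on linear_conv_bounded_linear[THEN iffD1], simp)

theorem mainTheorem4:
  fixes \<Theta> :: "'t::{banach, second_countable_topology} set"
    and \<mu> :: "'t measure"
    and Obs :: "'u::banach \<Rightarrow> real^'n"
    and Mdag M :: "'t \<Rightarrow> 'u"
    and m_E :: 'u
    and \<Sigma>\<epsilon> \<Gamma>E :: "real^'n^'n"
    and y :: "real^'n"
    and \<Phi>dag \<Phi>enh :: "'t \<Rightarrow> real"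
    and C_enh C :: real
  assumes \<Theta>_borel: "\<Theta> \<in> sets borel"
    and \<mu>_sets: "sets \<mu> = sets (restrict_space borel \<Theta>)"
    and \<mu>_prob: "prob_space \<mu>"
    and Obs_lin: "bounded_linear Obs"
    and Mdag_meas: "Mdag \<in> borel_measurable \<mu>"
    and M_meas: "M \<in> borel_measurable \<mu>"
    and \<Sigma>_spd: "spd \<Sigma>\<epsilon>"
    and \<Gamma>_spsd: "spsd \<Gamma>E"
    and \<Phi>dag_def: "\<Phi>dag = (\<lambda>t. 1/2 * wsq (matrix_inv \<Sigma>\<epsilon>) (y - Obs (Mdag t)))"
    and \<Phi>enh_def: "\<Phi>enh = (\<lambda>t. 1/2 * wsq (matrix_inv (\<Sigma>\<epsilon> + \<Gamma>E)) (y - Obs (M t) - Obs m_E))"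
    and C_enh_def: "C_enh = onorm (\<lambda>x. (matrix_inv (sqrtm \<Sigma>\<epsilon>) ** sqrtm (\<Sigma>\<epsilon> + \<Gamma>E)) *v x)"
    and int_dag: "integrable \<mu> \<Phi>dag"
    and int_enh: "integrable \<mu> \<Phi>enh"
    and C_def: "C = exp (2 * L1norm \<mu> \<Phi>dag + 2 * L1norm \<mu> \<Phi>enh) *
                   max (sqrt 2 * (sqrt (L1norm \<mu> \<Phi>dag) + C_enh * sqrt (L1norm \<mu> \<Phi>enh))) 1"
  shows "max (d_KL (reweight \<mu> \<Phi>dag) (reweight \<mu> \<Phi>enh))
             (d_KL (reweight \<mu> \<Phi>enh) (reweight \<mu> \<Phi>dag))
         \<le> ereal (C * (sqrt (L1norm \<mu> (\<lambda>t. wsq (matrix_inv \<Sigma>\<epsilon>) (Obs ((Mdag t - M t) - m_E))))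
                      + L1norm \<mu> (\<lambda>t. wsq_diff (matrix_inv \<Sigma>\<epsilon>) (matrix_inv (\<Sigma>\<epsilon> + \<Gamma>E))
                                              (y - Obs (M t) - Obs m_E))))"
proof -
  interpret prob_space \<mu> by (rule \<mu>_prob)
  have SG: "spd (\<Sigma>\<epsilon> + \<Gamma>E)" by (rule spd_add[OF \<Sigma>_spd \<Gamma>_spsd])
  define iR1 where "iR1 = matrix_inv (sqrtm \<Sigma>\<epsilon>)"
  define iR2 where "iR2 = matrix_inv (sqrtm (\<Sigma>\<epsilon> + \<Gamma>E))"
  define a where "a t = y - Obs (Mdag t)" for t
  define b where "b t = y - Obs (M t) - Obs m_E" for t
  define al where "al t = iR1 *v a t" for t
  define be where "be t = iR2 *v b t" for t
  define ga where "ga t = iR1 *v b t" for t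
  have wQ: "wsq (matrix_inv \<Sigma>\<epsilon>) v = norm (iR1 *v v)^2" for v
    unfolding wsq_def iR1_def by (rule sqrt_facts(4)[OF \<Sigma>_spd])
  have wP: "wsq (matrix_inv (\<Sigma>\<epsilon> + \<Gamma>E)) v = norm (iR2 *v v)^2" for v
    unfolding wsq_def iR2_def by (rule sqrt_facts(4)[OF SG])
  have Pd: "\<Phi>dag t = 1/2 * norm (al t)^2" for t unfolding \<Phi>dag_def al_def a_def wQ ..
  have Pe: "\<Phi>enh t = 1/2 * norm (be t)^2" for t unfolding \<Phi>enh_def be_def b_def wP ..
  have Dt: "wsq (matrix_inv \<Sigma>\<epsilon>) (Obs ((Mdag t - M t) - m_E)) = norm (ga t - al t)^2" for t
  proof -
    interpret O: bounded_linear Obs by (rule Obs_lin)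
    have "Obs ((Mdag t - M t) - m_E) = b t - a t" unfolding a_def b_def by (simp add: O.diff)
    then show ?thesis unfolding wQ ga_def al_def by (simp add: matrix_vector_mult_diff_distrib)
  qed
  have Wt: "wsq_diff (matrix_inv \<Sigma>\<epsilon>) (matrix_inv (\<Sigma>\<epsilon> + \<Gamma>E)) (b t) = norm (ga t)^2 - norm (be t)^2" for t
    using wQ[of "b t"] wP[of "b t"] unfolding wsq_diff_def wsq_def ga_def be_def by simp
  define Ce where "Ce = C_enh"
  have ef1: "norm (be t) \<le> norm (ga t)" for t
    unfolding be_def ga_def iR1_def iR2_def by (rule enh_facts(1)[OF \<Sigma>_spd \<Gamma>_spsd])
  have ef2: "norm (ga t) \<le> C_enh * norm (be t)" for t
    unfolding be_def ga_def iR1_def iR2_def C_enh_def by (rule enh_facts(2)[OF \<Sigma>_spd \<Gamma>_spsd])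
  have Cpos: "C_enh \<ge> 0" unfolding C_enh_def
    by (rule onorm_pos_le) (simp add: linear_conv_bounded_linear[symmetric])
  have Om: "(\<lambda>t. Obs (g t)) \<in> borel_measurable \<mu>" if "g \<in> borel_measurable \<mu>" for g
    by (rule borel_measurable_continuous_on[OF _ that]) (rule linear_continuous_on[OF Obs_lin])
  have am[measurable]: "a \<in> borel_measurable \<mu>" unfolding a_def[abs_def] using Om[OF Mdag_meas] by measurable
  have bm[measurable]: "b \<in> borel_measurable \<mu>" unfolding b_def[abs_def] using Om[OF M_meas] by measurable
  have alm[measurable]: "al \<in> borel_measurable \<mu>" unfolding al_def[abs_def] by (rule mv_meas[OF am])
  have bem[measurable]: "be \<in> borel_measurable \<mu>" unfolding be_def[abs_def] by (rule mv_meas[OF bm])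
  have gam[measurable]: "ga \<in> borel_measurable \<mu>" unfolding ga_def[abs_def] by (rule mv_meas[OF bm])
  define na where "na t = norm (al t)" for t
  define nb where "nb t = norm (be t)" for t
  define ng where "ng t = norm (ga t)" for t
  define nd where "nd t = norm (ga t - al t)" for t
  have nam[measurable]: "na \<in> borel_measurable \<mu>" unfolding na_def[abs_def] by measurable
  have nbm[measurable]: "nb \<in> borel_measurable \<mu>" unfolding nb_def[abs_def] by measurable
  have ngm[measurable]: "ng \<in> borel_measurable \<mu>" unfolding ng_def[abs_def] by measurable
  have ndm[measurable]: "nd \<in> borel_measurable \<mu>" unfolding nd_def[abs_def] by measurable
  have Pdm[measurable]: "\<Phi>dag \<in> borel_measurable \<mu>" using int_dag by (rule borel_measurable_integrable)
  have Pem[measurable]: "\<Phi>enh \<in> borel_measurable \<mu>" using int_enh by (rule borel_measurable_integrable)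
  have ina: "integrable \<mu> (\<lambda>t. na t^2)"
  proof -
    have "integrable \<mu> (\<lambda>t. 2 * \<Phi>dag t)" using int_dag by simp
    moreover have "(\<lambda>t. 2 * \<Phi>dag t) = (\<lambda>t. na t^2)" by (simp add: fun_eq_iff Pd na_def)
    ultimately show ?thesis by simp
  qed
  have inb: "integrable \<mu> (\<lambda>t. nb t^2)"
  proof -
    have "integrable \<mu> (\<lambda>t. 2 * \<Phi>enh t)" using int_enh by simp
    moreover have "(\<lambda>t. 2 * \<Phi>enh t) = (\<lambda>t. nb t^2)" by (simp add: fun_eq_iff Pe nb_def)
    ultimately show ?thesis by simp
  qed
  have ing: "integrable \<mu> (\<lambda>t. ng t^2)"
  proof (rule Bochner_Integration.integrable_bound)
    show "integrable \<mu> (\<lambda>t. C_enh^2 * nb t^2)" using inb by simp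
    show "AE t in \<mu>. norm (ng t^2) \<le> norm (C_enh^2 * nb t^2)"
    proof (rule AE_I2)
      fix t
      have "ng t \<le> C_enh * nb t" "0 \<le> ng t" using ef2[of t] unfolding ng_def nb_def by auto
      then have "ng t^2 \<le> (C_enh * nb t)^2" by (intro power_mono) auto
      then show "norm (ng t^2) \<le> norm (C_enh^2 * nb t^2)" by (simp add: power_mult_distrib)
    qed
  qed simp
  have ind: "integrable \<mu> (\<lambda>t. nd t^2)"
  proof (rule Bochner_Integration.integrable_bound)
    show "integrable \<mu> (\<lambda>t. 2 * ng t^2 + 2 * na t^2)" using ing ina by simp
    show "AE t in \<mu>. norm (nd t^2) \<le> norm (2 * ng t^2 + 2 * na t^2)"
    proof (rule AE_I2)
      fix t
      have "nd t \<le> ng t + na t" unfolding nd_def ng_def na_def by (rule norm_triangle_ineq4)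
      moreover have "0 \<le> nd t" "0 \<le> ng t" "0 \<le> na t" unfolding nd_def ng_def na_def by auto
      ultimately have "nd t^2 \<le> (ng t + na t)^2" by (intro power_mono) auto
      also have "\<dots> \<le> 2 * ng t^2 + 2 * na t^2"
        using sum_squares_bound[of "ng t" "na t"] by (simp add: power2_eq_square algebra_simps)
      finally show "norm (nd t^2) \<le> norm (2 * ng t^2 + 2 * na t^2)" by simp
    qed
  qed simp
  have iW: "integrable \<mu> (\<lambda>t. ng t^2 - nb t^2)" using ing inb by simp
  define A where "A = L1norm \<mu> \<Phi>dag"
  define B where "B = L1norm \<mu> \<Phi>enh"
  define D where "D = L1norm \<mu> (\<lambda>t. wsq (matrix_inv \<Sigma>\<epsilon>) (Obs ((Mdag t - M t) - m_E)))"
  define W where "W = L1norm \<mu> (\<lambda>t. wsq_diff (matrix_inv \<Sigma>\<epsilon>) (matrix_inv (\<Sigma>\<epsilon> + \<Gamma>E))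
                                              (y - Obs (M t) - Obs m_E))"
  have Adef: "A = (\<integral>t. \<Phi>dag t \<partial>\<mu>)" unfolding A_def L1norm_def by (simp add: Pd)
  have Bdef: "B = (\<integral>t. \<Phi>enh t \<partial>\<mu>)" unfolding B_def L1norm_def by (simp add: Pe)
  have A2: "(\<integral>t. na t^2 \<partial>\<mu>) = 2 * A" unfolding Adef Pd na_def by simp
  have B2: "(\<integral>t. nb t^2 \<partial>\<mu>) = 2 * B" unfolding Bdef Pe nb_def by simp
  have Ddef: "D = (\<integral>t. nd t^2 \<partial>\<mu>)" unfolding D_def L1norm_def Dt nd_def by simp
  have Wdef: "W = (\<integral>t. ng t^2 - nb t^2 \<partial>\<mu>)"
  proof -
    have "W = (\<integral>t. \<bar>ng t^2 - nb t^2\<bar> \<partial>\<mu>)" unfolding W_def L1norm_def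
      using Wt unfolding b_def ng_def nb_def by simp
    also have "\<dots> = (\<integral>t. ng t^2 - nb t^2 \<partial>\<mu>)"
    proof (rule Bochner_Integration.integral_cong[OF refl])
      fix t assume "t \<in> space \<mu>"
      have "nb t \<le> ng t" "0 \<le> nb t" using ef1[of t] unfolding nb_def ng_def by auto
      then have "nb t^2 \<le> ng t^2" by (intro power_mono) auto
      then show "\<bar>ng t^2 - nb t^2\<bar> = ng t^2 - nb t^2" by simp
    qed
    finally show ?thesis .
  qed
  have A0: "A \<ge> 0" "B \<ge> 0" "D \<ge> 0" "W \<ge> 0" unfolding A_def B_def D_def W_def L1norm_def by auto
  have cs1: "integrable \<mu> (\<lambda>t. nd t * na t)" "(\<integral>t. nd t * na t \<partial>\<mu>) \<le> sqrt D * sqrt (2 * A)"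
    using CS_integral[OF ndm nam _ _ ind ina] unfolding Ddef A2 by (auto simp: nd_def na_def)
  have cs2: "integrable \<mu> (\<lambda>t. nd t * nb t)" "(\<integral>t. nd t * nb t \<partial>\<mu>) \<le> sqrt D * sqrt (2 * B)"
    using CS_integral[OF ndm nbm _ _ ind inb] unfolding Ddef B2 by (auto simp: nd_def nb_def)
  define I where "I = (\<integral>t. \<bar>\<Phi>dag t - \<Phi>enh t\<bar> \<partial>\<mu>)"
  define S where "S = sqrt 2 * (sqrt A + C_enh * sqrt B)"
  have S0: "S \<ge> 0" unfolding S_def using Cpos A0 by simp
  have pwI: "\<bar>\<Phi>dag t - \<Phi>enh t\<bar> \<le> 1/2 * (nd t * na t + C_enh * (nd t * nb t) + (ng t^2 - nb t^2))" for t
    using pointwise_bound[OF ef1 ef2, of "al t"] unfolding Pd Pe na_def nb_def ng_def nd_def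
    by (simp add: algebra_simps)
  have "I \<le> (\<integral>t. 1/2 * (nd t * na t + C_enh * (nd t * nb t) + (ng t^2 - nb t^2)) \<partial>\<mu>)"
    unfolding I_def using pwI cs1(1) cs2(1) iW int_dag int_enh by (intro integral_mono) auto
  also have "\<dots> = 1/2 * ((\<integral>t. nd t * na t \<partial>\<mu>) + C_enh * (\<integral>t. nd t * nb t \<partial>\<mu>) + W)"
    unfolding Wdef using cs1(1) cs2(1) iW by simp
  also have "\<dots> \<le> 1/2 * (sqrt D * sqrt (2 * A) + C_enh * (sqrt D * sqrt (2 * B)) + W)"
    using cs1(2) cs2(2) Cpos by (intro mult_left_mono add_mono mult_left_mono) auto
  also have "\<dots> = 1/2 * (sqrt D * S + W)"
    unfolding S_def by (simp add: real_sqrt_mult algebra_simps)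
  finally have Ibound: "2 * I \<le> sqrt D * S + W" by simp
  have I0: "I \<ge> 0" unfolding I_def by simp
  have fin: "2 * exp X * I \<le> C * (sqrt D + W)" if X: "0 \<le> X" "X \<le> A + B" for X
  proof -
    have "2 * exp X * I = exp X * (2 * I)" by simp
    also have "\<dots> \<le> exp X * (sqrt D * S + W)" using Ibound by simp
    also have "\<dots> \<le> exp (2 * A + 2 * B) * (max S 1 * (sqrt D + W))"
    proof (rule mult_mono)
      show "exp X \<le> exp (2 * A + 2 * B)" using X A0 by simp
      have "sqrt D * S \<le> sqrt D * max S 1" using A0 by (intro mult_left_mono) auto
      moreover have "W \<le> max S 1 * W" using A0 by (simp add: le_max_iff_disj mult_le_cancel_right1)
      ultimately show "sqrt D * S + W \<le> max S 1 * (sqrt D + W)" by (simp add: algebra_simps)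
      show "0 \<le> sqrt D * S + W" using A0 S0 by simp
    qed simp
    also have "\<dots> = C * (sqrt D + W)" unfolding C_def S_def A_def B_def by simp
    finally show ?thesis .
  qed
  have nnd: "\<And>x. x \<in> space \<mu> \<Longrightarrow> 0 \<le> \<Phi>dag x" and nne: "\<And>x. x \<in> space \<mu> \<Longrightarrow> 0 \<le> \<Phi>enh x"
    by (simp_all add: Pd Pe)
  have k1: "d_KL (reweight \<mu> \<Phi>dag) (reweight \<mu> \<Phi>enh) \<le> ereal (C * (sqrt D + W))"
  proof -
    have "d_KL (reweight \<mu> \<Phi>dag) (reweight \<mu> \<Phi>enh) \<le> ereal (2 * exp A * I)"
      using KL_bound[OF \<mu>_prob Pdm Pem nnd nne int_dag int_enh] unfolding Adef I_def .
    also have "\<dots> \<le> ereal (C * (sqrt D + W))" using fin[of A] A0 by simp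
    finally show ?thesis .
  qed
  have k2: "d_KL (reweight \<mu> \<Phi>enh) (reweight \<mu> \<Phi>dag) \<le> ereal (C * (sqrt D + W))"
  proof -
    have II: "(\<integral>t. \<bar>\<Phi>enh t - \<Phi>dag t\<bar> \<partial>\<mu>) = I" unfolding I_def by (simp add: abs_minus_commute)
    have "d_KL (reweight \<mu> \<Phi>enh) (reweight \<mu> \<Phi>dag) \<le> ereal (2 * exp B * I)"
      using KL_bound[OF \<mu>_prob Pem Pdm nne nnd int_enh int_dag] unfolding Bdef II .
    also have "\<dots> \<le> ereal (C * (sqrt D + W))" using fin[of B] A0 by simp
    finally show ?thesis .
  qed
  show ?thesis using k1 k2 unfolding D_def W_def by simp
qed

end
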